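(* If the link function is unknown, the optimal policy cannot be identified from the transitions and the comparison probabilities, even when there are only two candidate link functions: there exist an episodic MDP (with horizon $H=2$, known transitions), two link functions $\sigma_1,\sigma_2$ and two reward functions $r^{(1)},r^{(2)}$ such that $\sigma_1(r^{(1)}(\tau)-r^{(1)}(\tau'))=\sigma_2(r^{(2)}(\tau)-r^{(2)}(\tau'))$ for all pairs of trajectories $\tau,\tau'$, while the optimal policy with respect to $r^{(1)}$ and the optimal policy with respect to $r^{(2)}$ differ (each is suboptimal for the other reward).
   Context: Episodic MDP with trajectories $\tau$; a comparison oracle with link function $\sigma$ and reward $r$ returns $\tau\succ\tau'$ with probability $\sigma(r(\tau)-r(\tau'))$. A policy is optimal for $r$ if it maximizes $\mathbb{E}_{\tau\sim\pi}[r(\tau)]$. *)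

theory Defs
  imports "HOL-Probability.Probability"
begin

text \<open>Link function: strictly increasing, continuous, values in [0,1],
  and symmetric: sigma(-x) = 1 - sigma(x) (so that P(tau > tau') + P(tau' > tau) = 1).\<close>
definition link_function :: "(real \<Rightarrow> real) \<Rightarrow> bool" where
  "link_function \<sigma> \<longleftrightarrow> strict_mono \<sigma> \<and> continuous_on UNIV \<sigma>
     \<and> (\<forall>x. 0 \<le> \<sigma> x \<and> \<sigma> x \<le> 1) \<and> (\<forall>x. \<sigma> (- x) = 1 - \<sigma> x)"

record mdp2 =
  St :: "nat set"
  Act :: "nat set"
  init :: "nat pmf"
  trans :: "nat \<Rightarrow> nat \<Rightarrow> nat \<Rightarrow> nat pmf"

definition wf_mdp2 :: "mdp2 \<Rightarrow> bool" where
  "wf_mdp2 M \<longleftrightarrow> finite (St M) \<and> St M \<noteq> {} \<and> finite (Act M) \<and> Act M \<noteq> {}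
     \<and> set_pmf (init M) \<subseteq> St M
     \<and> (\<forall>h s a. s \<in> St M \<longrightarrow> a \<in> Act M \<longrightarrow> set_pmf (trans M h s a) \<subseteq> St M)"

text \<open>Trajectories of length H = 2: (s1, a1, s2, a2).\<close>
type_synonym traj = "nat \<times> nat \<times> nat \<times> nat"

definition trajs :: "mdp2 \<Rightarrow> traj set" where
  "trajs M = St M \<times> Act M \<times> St M \<times> Act M"

text \<open>(Markov, possibly randomized) policy: pi h s is the action distribution at step h in state s.\<close>
type_synonym policy = "nat \<Rightarrow> nat \<Rightarrow> nat pmf"

definition policy_of :: "mdp2 \<Rightarrow> policy \<Rightarrow> bool" where
  "policy_of M \<pi> \<longleftrightarrow> (\<forall>h s. s \<in> St M \<longrightarrow> set_pmf (\<pi> h s) \<subseteq> Act M)"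

definition traj_dist :: "mdp2 \<Rightarrow> policy \<Rightarrow> traj pmf" where
  "traj_dist M \<pi> = do {
     s1 \<leftarrow> init M;
     a1 \<leftarrow> \<pi> 1 s1;
     s2 \<leftarrow> trans M 1 s1 a1;
     a2 \<leftarrow> \<pi> 2 s2;
     return_pmf (s1, a1, s2, a2) }"

definition value_of :: "mdp2 \<Rightarrow> policy \<Rightarrow> (traj \<Rightarrow> real) \<Rightarrow> real" where
  "value_of M \<pi> r = measure_pmf.expectation (traj_dist M \<pi>) r"

definition optimal :: "mdp2 \<Rightarrow> (traj \<Rightarrow> real) \<Rightarrow> policy \<Rightarrow> bool" where
  "optimal M r \<pi> \<longleftrightarrow> policy_of M \<pi> \<and>
     (\<forall>\<pi>'. policy_of M \<pi>' \<longrightarrow> value_of M \<pi>' r \<le> value_of M \<pi> r)"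

end

theory Submission imports Defs begin

definition K :: "nat \<Rightarrow> nat pmf" where
  "K a = (if a = 0 then return_pmf 4 else pmf_of_set {0,1,2,3})"

definition M0 :: mdp2 where
  "M0 = \<lparr>St = {0,1,2,3,4}, Act = {0,1}, init = return_pmf 0, trans = (\<lambda>h s a. K a)\<rparr>"

lemma map_traj: "map_pmf (\<lambda>\<tau>. fst (snd (snd \<tau>))) (traj_dist M0 \<pi>) = bind_pmf (\<pi> 1 0) K"
  unfolding traj_dist_def M0_def
  by (simp add: map_bind_pmf bind_return_pmf map_return_pmf bind_return_pmf')

lemma int_ind[simp]: "integrable (measure_pmf p) (indicator A :: _ \<Rightarrow> real)"
  by (rule measure_pmf.integrable_const_bound[where B=1]) (auto simp: indicator_def)

lemma pmfK: "pmf (bind_pmf p K) s = pmf p 0 * (if s = 4 then 1 else 0) + (1 - pmf p 0) * (if s \<in> {0,1,2,3} then 1/4 else 0)"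
proof -
  have "pmf (bind_pmf p K) s = (\<integral>x. pmf (K x) s \<partial>measure_pmf p)" by (rule pmf_bind)
  also have "\<dots> = (\<integral>x. (if s \<in> {0,1,2,3} then 1/4 else 0) + ((if s = 4 then 1 else 0) - (if s \<in> {0,1,2,3} then 1/4 else 0)) * indicator {0} x \<partial>measure_pmf p)"
    by (rule Bochner_Integration.integral_cong) (auto simp: K_def pmf_of_set indicator_def)
  also have "\<dots> = pmf p 0 * (if s = 4 then 1 else 0) + (1 - pmf p 0) * (if s \<in> {0,1,2,3} then 1/4 else 0)"
    by (subst Bochner_Integration.integral_add) (auto intro!: integrable_divide simp: measure_pmf.prob_space pmf.rep_eq algebra_simps measure_pmf.emeasure_space_1)
  finally show ?thesis .
qed

lemma val:
  "value_of M0 \<pi> (\<lambda>\<tau>. g (fst (snd (snd \<tau>)))) = pmf (\<pi> 1 0) 0 * g 4 + (1 - pmf (\<pi> 1 0) 0) * (g 0 + g 1 + g 2 + g 3) / 4"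
proof -
  have "value_of M0 \<pi> (\<lambda>\<tau>. g (fst (snd (snd \<tau>)))) = measure_pmf.expectation (bind_pmf (\<pi> 1 0) K) g"
    unfolding value_of_def map_traj[symmetric] by simp
  also have "\<dots> = (\<Sum>a\<in>{0,1,2,3,4}. g a * pmf (bind_pmf (\<pi> 1 0) K) a)"
    by (rule integral_measure_pmf_real) (auto simp: K_def split: if_splits)
  also have "\<dots> = pmf (\<pi> 1 0) 0 * g 4 + (1 - pmf (\<pi> 1 0) 0) * (g 0 + g 1 + g 2 + g 3) / 4"
    by (simp add: pmfK field_simps)
  finally show ?thesis .
qed

definition sg :: "real \<Rightarrow> real" where
  "sg t = 1/2 + t / (2 * (1 + \<bar>t\<bar>))"

definition hh :: "real \<Rightarrow> real" where
  "hh x = x + 2 * (max (-2) (min 2 x) - max (-1) (min 1 x))"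

lemma sg_mono: "strict_mono sg"
proof (rule strict_monoI)
  fix x y :: real assume xy: "x < y"
  have p1: "0 < 1 + \<bar>x\<bar>" "0 < 1 + \<bar>y\<bar>" by auto
  have "x * (1 + \<bar>y\<bar>) < y * (1 + \<bar>x\<bar>)"
    using xy mult_nonpos_nonneg[of x y] by (cases "0 \<le> x"; cases "0 \<le> y") (auto simp: algebra_simps abs_if)
  then have "x / (1 + \<bar>x\<bar>) < y / (1 + \<bar>y\<bar>)"
    using p1 by (simp add: divide_simps)
  moreover have "\<And>t::real. t / (2 * (1 + \<bar>t\<bar>)) = (t / (1 + \<bar>t\<bar>)) / 2" by simp
  ultimately show "sg x < sg y" unfolding sg_def by (metis add_less_cancel_left divide_strict_right_mono zero_less_numeral)
qed

lemma sg_link: "link_function sg"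
proof -
  have b: "\<bar>t / (1 + \<bar>t\<bar>)\<bar> \<le> 1" for t :: real
    by (simp add: abs_divide divide_simps)
  have "0 \<le> sg t \<and> sg t \<le> 1" for t
  proof -
    have "-(1/2) \<le> t / (2 * (1 + \<bar>t\<bar>)) \<and> t / (2 * (1 + \<bar>t\<bar>)) \<le> 1/2"
      by (auto simp: divide_simps abs_if)
    then show ?thesis unfolding sg_def by linarith
  qed
  moreover have "continuous_on UNIV sg"
    unfolding sg_def by (intro continuous_intros) (auto simp: add_pos_nonneg)
  moreover have "sg (- x) = 1 - sg x" for x unfolding sg_def by simp
  ultimately show ?thesis using sg_mono unfolding link_function_def by blast
qed

lemma hh_mono: "strict_mono hh"
  by (rule strict_monoI) (auto simp: hh_def min_def max_def)

lemma hh_link: "link_function (sg \<circ> hh)"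
proof -
  have "strict_mono (sg \<circ> hh)" using sg_mono hh_mono by (simp add: strict_mono_def)
  moreover have "continuous_on UNIV (sg \<circ> hh)"
  proof (rule continuous_on_compose)
    show "continuous_on UNIV hh" unfolding hh_def by (intro continuous_intros)
    show "continuous_on (range hh) sg" using sg_link
      by (auto simp: link_function_def intro: continuous_on_subset)
  qed
  moreover have "hh (- x) = - hh x" for x by (auto simp: hh_def min_def max_def)
  ultimately show ?thesis using sg_link by (auto simp: link_function_def)
qed

definition g1 :: "nat \<Rightarrow> real" where "g1 s = (if s = 4 then 1 else if s = 3 then 5 else 0)"
definition g2 :: "nat \<Rightarrow> real" where "g2 s = (if s = 4 then 1 else if s = 3 then 3 else 0)"

lemma g_rel: "g1 a - g1 b = hh (g2 a - g2 b)"
  by (auto simp: g1_def g2_def hh_def)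

theorem lemma1:
  shows "\<exists>M \<sigma>1 \<sigma>2 (r1 :: traj \<Rightarrow> real) (r2 :: traj \<Rightarrow> real).
     wf_mdp2 M \<and> link_function \<sigma>1 \<and> link_function \<sigma>2 \<and>
     (\<forall>\<tau>\<in>trajs M. \<forall>\<tau>'\<in>trajs M. \<sigma>1 (r1 \<tau> - r1 \<tau>') = \<sigma>2 (r2 \<tau> - r2 \<tau>')) \<and>
     (\<exists>\<pi>. optimal M r1 \<pi>) \<and> (\<exists>\<pi>. optimal M r2 \<pi>) \<and>
     (\<forall>\<pi>. optimal M r1 \<pi> \<longrightarrow> \<not> optimal M r2 \<pi>)"
proof -
  define r1 :: "traj \<Rightarrow> real" where "r1 = (\<lambda>\<tau>. g1 (fst (snd (snd \<tau>))))"
  define r2 :: "traj \<Rightarrow> real" where "r2 = (\<lambda>\<tau>. g2 (fst (snd (snd \<tau>))))"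
  have v1: "value_of M0 \<pi> r1 = 5/4 - pmf (\<pi> 1 0) 0 / 4" for \<pi>
    unfolding r1_def val by (simp add: g1_def field_simps)
  have v2: "value_of M0 \<pi> r2 = 3/4 + pmf (\<pi> 1 0) 0 / 4" for \<pi>
    unfolding r2_def val by (simp add: g2_def field_simps)
  have wf: "wf_mdp2 M0" unfolding wf_mdp2_def M0_def by (auto simp: K_def)
  have pol: "policy_of M0 (\<lambda>h s. return_pmf a)" if "a \<in> {0,1}" for a
    using that unfolding policy_of_def M0_def by auto
  have o1: "optimal M0 r1 (\<lambda>h s. return_pmf 1)"
    unfolding optimal_def using pol[of 1] by (auto simp: v1)
  have o2: "optimal M0 r2 (\<lambda>h s. return_pmf 0)"
    unfolding optimal_def using pol[of 0] apply (auto simp: v2)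
    subgoal for \<pi>' using pmf_le_1[of "\<pi>' (Suc 0) 0" 0] by linarith
    done
  have d: "\<not> optimal M0 r2 \<pi>" if "optimal M0 r1 \<pi>" for \<pi>
  proof
    assume "optimal M0 r2 \<pi>"
    then have "value_of M0 (\<lambda>h s. return_pmf 0) r2 \<le> value_of M0 \<pi> r2"
      using pol[of 0] unfolding optimal_def by auto
    then have a: "1 \<le> pmf (\<pi> 1 0) 0" by (simp add: v2)
    have "value_of M0 (\<lambda>h s. return_pmf 1) r1 \<le> value_of M0 \<pi> r1"
      using that pol[of 1] unfolding optimal_def by auto
    then have "pmf (\<pi> 1 0) 0 \<le> 0" by (simp add: v1)
    with a show False by simp
  qed
  have rel: "sg (r1 \<tau> - r1 \<tau>') = (sg \<circ> hh) (r2 \<tau> - r2 \<tau>')" for \<tau> \<tau>'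
    unfolding r1_def r2_def by (simp add: g_rel)
  show ?thesis
    using wf sg_link hh_link rel o1 o2 d by blast
qed

end
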